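(* Let $A_1,\dots,A_k$ be $n$-dimensional boxes, and let $\mathcal{O}$ be a set of orders of them (innermost to outermost) each of which is a possible arrangement. (1) For any constant $\lambda>0$, the boxes obtained by multiplying all closed side lengths of all $A_j$ by $\lambda$ can be put in every order of $\mathcal{O}$ (with corresponding labels). (2) For any constant $c>0$, the boxes obtained by adding $c$ to all closed side lengths of all $A_j$ can be put in every order of $\mathcal{O}$.
   Context: An $n$-dimensional box $A$ has closed side lengths $a_1\le\dots\le a_n$ (positive reals). A state of $A$ is either closed or expanded along one side $i$: $a_i$ is replaced by $a_i'$ with $a_i\le a_i'\le 2a_i$, other sides unchanged (only one side can expand). The dimension vector of a state is its side lengths sorted non-decreasingly. A box in some state fits inside another box in some state if each coordinate of the outer one's dimension vector is strictly larger than the corresponding coordinate of the inner one's. An order $X_1,\dots,X_k$ (innermost to outermost) is a possible arrangement if each box can be given a state so that $X_j$ fits inside $X_{j+1}$ for all $j$; states may differ between arrangements. *)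

theory Defs
  imports "HOL-Analysis.Analysis" "HOL-Library.Multiset"
begin

text \<open>A state is either closed (side lengths unchanged) or expanded along
  exactly one side i, where a_i is replaced by some a_i' with a_i \<le> a_i' \<le> 2 a_i.\<close>

definition is_box :: "nat \<Rightarrow> real list \<Rightarrow> bool" where
  "is_box n a \<longleftrightarrow> length a = n \<and> (\<forall>x\<in>set a. x > 0)"

definition state_of :: "real list \<Rightarrow> real list \<Rightarrow> bool" where
  "state_of a s \<longleftrightarrow> s = a \<or>
     (\<exists>i < length a. \<exists>t. a ! i \<le> t \<and> t \<le> 2 * a ! i \<and> s = a[i := t])"

definition dimvec :: "real list \<Rightarrow> real list" where
  "dimvec s = sort s"

definition fits_in :: "real list \<Rightarrow> real list \<Rightarrow> bool" where
  "fits_in s t \<longleftrightarrow> length s = length t \<and>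
     (\<forall>j < length s. dimvec s ! j < dimvec t ! j)"

text \<open>An order X_1,...,X_k (innermost to outermost), given as a list of box labels,
  is a possible arrangement of the boxes A if each box can be given a state so that
  consecutive boxes fit.\<close>
definition possible_arrangement :: "(nat \<Rightarrow> real list) \<Rightarrow> nat list \<Rightarrow> bool" where
  "possible_arrangement A ord \<longleftrightarrow>
     (\<exists>st :: nat \<Rightarrow> real list. (\<forall>j\<in>set ord. state_of (A j) (st j)) \<and>
        (\<forall>m. Suc m < length ord \<longrightarrow> fits_in (st (ord ! m)) (st (ord ! Suc m))))"

definition is_order :: "nat \<Rightarrow> nat list \<Rightarrow> bool" where
  "is_order k ord \<longleftrightarrow> mset ord = mset [0..<k]"

end

theory Submission
  imports Defs
begin

lemma sort_map_mono_aux: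
  fixes f :: "real \<Rightarrow> real"
  assumes "mono f"
  shows "sort (map f xs) = map f (sort xs)"
proof (rule properties_for_sort)
  show "mset (map f (sort xs)) = mset (map f xs)" by simp
  show "sorted (map f (sort xs))"
    unfolding sorted_map using assms
  proof -
    have "sorted (sort xs)" by simp
    then show "sorted_wrt (\<lambda>x y. f x \<le> f y) (sort xs)"
      by (rule sorted_wrt_mono_rel[rotated]) (use assms in \<open>simp add: monoD\<close>)
  qed
qed

lemma transfer_arr:
  fixes f :: "real \<Rightarrow> real"
  assumes sm: "strict_mono f"
    and st: "\<And>a i t. i < length a \<Longrightarrow> a ! i \<le> t \<Longrightarrow> t \<le> 2 * a ! i \<Longrightarrow>
               f (a ! i) \<le> f t \<and> f t \<le> 2 * f (a ! i)"
    and pa: "possible_arrangement A ord"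
  shows "possible_arrangement (\<lambda>j. map f (A j)) ord"
proof -
  have mf: "mono f" using sm strict_mono_mono by blast
  obtain s where s1: "\<forall>j\<in>set ord. state_of (A j) (s j)"
    and s2: "\<forall>m. Suc m < length ord \<longrightarrow> fits_in (s (ord ! m)) (s (ord ! Suc m))"
    using pa unfolding possible_arrangement_def by blast
  have S: "state_of (map f a) (map f x)" if "state_of a x" for a x
  proof -
    from that consider "x = a" | i t where "i < length a" "a ! i \<le> t" "t \<le> 2 * a ! i" "x = a[i := t]"
      unfolding state_of_def by blast
    then show ?thesis
    proof cases
      case 1 then show ?thesis by (simp add: state_of_def)
    next
      case 2
      then show ?thesis unfolding state_of_def using st[OF 2(1-3)]
        by (intro disjI2 exI[of _ i]) (simp add: map_update, blast)
    qed
  qed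
  have F: "fits_in (map f x) (map f y)" if "fits_in x y" for x y
    using that unfolding fits_in_def dimvec_def
    by (auto simp add: sort_map_mono_aux[OF mf] strict_monoD[OF sm])
  show ?thesis unfolding possible_arrangement_def
    by (rule exI[of _ "\<lambda>j. map f (s j)"]) (use s1 s2 S F in auto)
qed

theorem proposition24:
  fixes n k :: nat and A :: "nat \<Rightarrow> real list" and Ords :: "nat list set"
  assumes boxes: "\<forall>j < k. is_box n (A j)"
    and orders: "\<forall>ord \<in> Ords. is_order k ord \<and> possible_arrangement A ord"
  shows "(\<forall>l::real. l > 0 \<longrightarrow>
            (\<forall>ord \<in> Ords. possible_arrangement (\<lambda>j. map (\<lambda>x. l * x) (A j)) ord))
       \<and> (\<forall>c::real. c > 0 \<longrightarrow>
            (\<forall>ord \<in> Ords. possible_arrangement (\<lambda>j. map (\<lambda>x. x + c) (A j)) ord))"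
proof (intro conjI allI impI ballI)
  fix l :: real and ord assume l: "l > 0" and o: "ord \<in> Ords"
  show "possible_arrangement (\<lambda>j. map (\<lambda>x. l * x) (A j)) ord"
  proof (rule transfer_arr)
    show "strict_mono (\<lambda>x. l * x)" using l by (simp add: strict_mono_def)
    show "possible_arrangement A ord" using orders o by blast
    fix a :: "real list" and i t assume "a ! i \<le> t" "t \<le> 2 * a ! i"
    then show "l * a ! i \<le> l * t \<and> l * t \<le> 2 * (l * a ! i)"
      using l by (simp add: mult_left_mono)
  qed
next
  fix c :: real and ord assume c: "c > 0" and o: "ord \<in> Ords"
  show "possible_arrangement (\<lambda>j. map (\<lambda>x. x + c) (A j)) ord"
  proof (rule transfer_arr)
    show "strict_mono (\<lambda>x. x + c)" by (simp add: strict_mono_def)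
    show "possible_arrangement A ord" using orders o by blast
    fix a :: "real list" and i t assume "a ! i \<le> t" "t \<le> 2 * a ! i"
    then show "a ! i + c \<le> t + c \<and> t + c \<le> 2 * (a ! i + c)"
      using c by simp
  qed
qed

end
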